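(* Let $(A^{\mathbb N},\mathbb B_\Pi(A^{\mathbb N}),m,\sigma)$ be a Markov shift over $A=\{0,1,\dots,l\}$ and let $\mathcal P=\{P_0,\dots,P_n\}\subset\mathbb B_\Pi(A^{\mathbb N})$ be a partition of $A^{\mathbb N}$ such that: (i) each $P_i$ is either a subset of some cylinder $C_a$, $a\in A$, or satisfies $\sigma^{-1}(P_i)=P_i$ and $m(P_i)=0$; (ii) for any $P_i,P_j\in\mathcal P$, either $P_i\cap\sigma^{-1}(P_j)=C_a\cap\sigma^{-1}(P_j)$ for some $a\in A$, or $m(P_i\cap\sigma^{-1}(P_j))=0$. Then $\mathcal P$ is generating and has the Markov property.
   Context: Markov shift over $A=\{0,\dots,l\}$: given an $(l+1)\times(l+1)$ stochastic matrix $Q=(q_{ij})$ and a stationary probability vector $p$ of $Q$ with all $p_a>0$, it is $(A^{\mathbb N},\mathbb B_\Pi(A^{\mathbb N}),m,\sigma)$ with $A^{\mathbb N}$ the one-sided sequences $s=(s_0,s_1,\dots)$, $\mathbb B_\Pi$ generated by cylinders $C_{a_0\dots a_{n-1}}=\{s: s_i=a_i, i<n\}$, $(\sigma s)_j=s_{j+1}$, and $m(C_{a_0\dots a_{n-1}})=p_{a_0}q_{a_0a_1}\cdots q_{a_{n-2}a_{n-1}}$. A finite measurable partition $\mathcal G=\{G_0,\dots,G_r\}$ is generating if for every measurable $B$ there is $A'$ in the $\sigma$-algebra generated by the sets $\sigma^{-k}(G_i)$, $k\in\mathbb N_0$, with $m(A'\triangle B)=0$. A finite partition $\mathcal M=\{M_0,\dots,M_r\}$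 has the Markov property if for all $n\in\mathbb N$ and $i_0,\dots,i_n$ with $m(M_{i_0}\cap\sigma^{-1}M_{i_1}\cap\dots\cap\sigma^{-(n-1)}M_{i_{n-1}})>0$, $\frac{m(M_{i_0}\cap\sigma^{-1}M_{i_1}\cap\dots\cap\sigma^{-n}M_{i_n})}{m(M_{i_0}\cap\dots\cap\sigma^{-(n-1)}M_{i_{n-1}})}=\frac{m(M_{i_{n-1}}\cap\sigma^{-1}M_{i_n})}{m(M_{i_{n-1}})}$. *)

theory Defs
  imports "HOL-Probability.Probability"
begin

text \<open>Alphabet A = {0..l}; sequence space A^N as functions nat => nat with values <= l.\<close>

definition seq_space :: "nat \<Rightarrow> (nat \<Rightarrow> nat) set" where
  "seq_space l = {s. \<forall>i. s i \<le> l}"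

definition cyl :: "nat \<Rightarrow> nat list \<Rightarrow> (nat \<Rightarrow> nat) set" where
  "cyl l w = {s \<in> seq_space l. \<forall>i<length w. s i = w ! i}"

definition cylinders :: "nat \<Rightarrow> (nat \<Rightarrow> nat) set set" where
  "cylinders l = {cyl l w | w. w \<noteq> [] \<and> set w \<subseteq> {..l}}"

definition shift :: "(nat \<Rightarrow> nat) \<Rightarrow> (nat \<Rightarrow> nat)" where
  "shift s = (\<lambda>j. s (Suc j))"

definition shift_pre :: "nat \<Rightarrow> nat \<Rightarrow> (nat \<Rightarrow> nat) set \<Rightarrow> (nat \<Rightarrow> nat) set" where
  "shift_pre l k B = (shift ^^ k) -` B \<inter> seq_space l"

definition markov_shift ::
  "nat \<Rightarrow> (nat \<Rightarrow> nat \<Rightarrow> real) \<Rightarrow> (nat \<Rightarrow> real) \<Rightarrow> (nat \<Rightarrow> nat) measure \<Rightarrow> bool" where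
  "markov_shift l Q p m \<longleftrightarrow>
     (\<forall>i\<le>l. \<forall>j\<le>l. 0 \<le> Q i j) \<and>
     (\<forall>i\<le>l. (\<Sum>j\<le>l. Q i j) = 1) \<and>
     (\<forall>a\<le>l. 0 < p a) \<and>
     (\<Sum>a\<le>l. p a) = 1 \<and>
     (\<forall>j\<le>l. (\<Sum>i\<le>l. p i * Q i j) = p j) \<and>
     space m = seq_space l \<and>
     sets m = sigma_sets (seq_space l) (cylinders l) \<and>
     (\<forall>w. w \<noteq> [] \<and> set w \<subseteq> {..l} \<longrightarrow>
        emeasure m (cyl l w) =
          ennreal (p (w ! 0) * (\<Prod>i<length w - 1. Q (w ! i) (w ! Suc i))))"

definition is_partition :: "nat \<Rightarrow> (nat \<Rightarrow> nat) measure \<Rightarrow> nat \<Rightarrow> (nat \<Rightarrow> (nat \<Rightarrow> nat) set) \<Rightarrow> bool" where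
  "is_partition l m n P \<longleftrightarrow>
     (\<forall>i\<le>n. P i \<in> sets m) \<and>
     (\<forall>i\<le>n. \<forall>j\<le>n. i \<noteq> j \<longrightarrow> P i \<inter> P j = {}) \<and>
     (\<Union>i\<le>n. P i) = seq_space l"

definition generating :: "nat \<Rightarrow> (nat \<Rightarrow> nat) measure \<Rightarrow> nat \<Rightarrow> (nat \<Rightarrow> (nat \<Rightarrow> nat) set) \<Rightarrow> bool" where
  "generating l m n G \<longleftrightarrow>
     (\<forall>B \<in> sets m. \<exists>A' \<in> sigma_sets (seq_space l) {shift_pre l k (G i) | k i. i \<le> n}.
        measure m ((A' - B) \<union> (B - A')) = 0)"

definition markov_property :: "nat \<Rightarrow> (nat \<Rightarrow> nat) measure \<Rightarrow> nat \<Rightarrow> (nat \<Rightarrow> (nat \<Rightarrow> nat) set) \<Rightarrow> bool" where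
  "markov_property l m r M \<longleftrightarrow>
     (\<forall>N::nat. \<forall>idx::nat \<Rightarrow> nat. N \<ge> 1 \<longrightarrow> (\<forall>k\<le>N. idx k \<le> r) \<longrightarrow>
        measure m (\<Inter>k<N. shift_pre l k (M (idx k))) > 0 \<longrightarrow>
        measure m (\<Inter>k\<le>N. shift_pre l k (M (idx k))) / measure m (\<Inter>k<N. shift_pre l k (M (idx k)))
        = measure m (M (idx (N - 1)) \<inter> shift_pre l 1 (M (idx N))) / measure m (M (idx (N - 1))))"

end

theory Submission
  imports Defs
begin


lemma funpow_shift: "(shift ^^ k) s = (\<lambda>j. s (j + k))"
  by (induction k arbitrary: s) (auto simp: shift_def)

lemma shift_pre_0: "shift_pre l 0 B = B \<inter> seq_space l"
  by (simp add: shift_pre_def)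

lemma shift_space: "s \<in> seq_space l \<Longrightarrow> (shift ^^ k) s \<in> seq_space l"
  by (simp add: funpow_shift seq_space_def)

lemma shift_space': "s \<in> seq_space l \<Longrightarrow> (\<lambda>j. s (j + k)) \<in> seq_space l"
  by (simp add: seq_space_def)

lemma shift_pre_shift_pre: "shift_pre l j (shift_pre l k B) = shift_pre l (j + k) B"
  unfolding shift_pre_def
  by (auto simp: funpow_shift seq_space_def add_ac)

lemma shift_pre_Int: "shift_pre l k (A \<inter> B) = shift_pre l k A \<inter> shift_pre l k B"
  by (auto simp: shift_pre_def)
lemma shift_pre_Diff: "shift_pre l k (A - B) = shift_pre l k A - shift_pre l k B"
  by (auto simp: shift_pre_def)
lemma shift_pre_Un: "shift_pre l k (A \<union> B) = shift_pre l k A \<union> shift_pre l k B"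
  by (auto simp: shift_pre_def)
lemma shift_pre_UN: "shift_pre l k (\<Union>i\<in>I. A i) = (\<Union>i\<in>I. shift_pre l k (A i))"
  by (auto simp: shift_pre_def)
lemma shift_pre_mono: "A \<subseteq> B \<Longrightarrow> shift_pre l k A \<subseteq> shift_pre l k B"
  by (auto simp: shift_pre_def)

lemma cyl_subset: "cyl l w \<subseteq> seq_space l" by (auto simp: cyl_def)

lemma cyl_Nil: "cyl l [] = seq_space l" by (auto simp: cyl_def)

lemma cyl_append_shift:
  assumes "v \<noteq> []"
  shows "cyl l (w @ [c]) \<inter> shift_pre l (length w) (cyl l v) =
         (if hd v = c then cyl l (w @ v) else {})"
proof (cases "hd v = c")
  case True
  have "s \<in> cyl l (w @ [c]) \<inter> shift_pre l (length w) (cyl l v) \<longleftrightarrow> s \<in> cyl l (w @ v)" for s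
  proof
    assume a: "s \<in> cyl l (w @ [c]) \<inter> shift_pre l (length w) (cyl l v)"
    hence sp: "s \<in> seq_space l" and w: "\<forall>i<length w. s i = w ! i"
      and v: "\<forall>i<length v. s (i + length w) = v ! i"
      by (auto simp: cyl_def shift_pre_def funpow_shift nth_append)
    show "s \<in> cyl l (w @ v)"
      unfolding cyl_def
    proof (intro CollectI conjI sp allI impI)
      fix i assume "i < length (w @ v)"
      show "s i = (w @ v) ! i"
      proof (cases "i < length w")
        case True thus ?thesis using w by (simp add: nth_append)
      next
        case False
        then obtain j where "i = j + length w" "j < length v"
          using \<open>i < length (w @ v)\<close> by (metis add.commute le_add_diff_inverse length_append nat_add_left_cancel_less not_less)
        thus ?thesis using v by (simp add: nth_append)
      qed
    qed
  next
    assume a: "s \<in> cyl l (w @ v)"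
    hence sp: "s \<in> seq_space l" and wv: "\<forall>i<length w + length v. s i = (w @ v) ! i"
      by (auto simp: cyl_def)
    have "s (length w) = c" using wv assms True
      by (metis add.right_neutral hd_conv_nth length_greater_0_conv nat_add_left_cancel_less nth_append_length_plus)
    moreover have "\<forall>i<length w. s i = w ! i" using wv by (simp add: nth_append)
    moreover have "\<forall>i<length v. s (i + length w) = v ! i" using wv
      by (metis add.commute nat_add_left_cancel_less nth_append_length_plus)
    ultimately show "s \<in> cyl l (w @ [c]) \<inter> shift_pre l (length w) (cyl l v)"
      using sp shift_space[OF sp, of "length w"]
      by (auto simp: cyl_def shift_pre_def funpow_shift nth_append less_Suc_eq)
  qed
  thus ?thesis using True by auto
next
  case False
  have "s \<notin> cyl l (w @ [c]) \<inter> shift_pre l (length w) (cyl l v)" for s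
  proof
    assume "s \<in> cyl l (w @ [c]) \<inter> shift_pre l (length w) (cyl l v)"
    hence "s (length w) = c" "s (0 + length w) = v ! 0"
      using assms by (auto simp: cyl_def shift_pre_def funpow_shift nth_append)
    thus False using False assms by (simp add: hd_conv_nth)
  qed
  thus ?thesis using False by auto
qed

lemma cyl_snoc: "cyl l w \<inter> shift_pre l (length w) (cyl l [a]) = cyl l (w @ [a])"
proof -
  have "s \<in> cyl l w \<inter> shift_pre l (length w) (cyl l [a]) \<longleftrightarrow> s \<in> cyl l (w @ [a])" for s
    by (auto simp: cyl_def shift_pre_def funpow_shift nth_append less_Suc_eq shift_space shift_space')
  thus ?thesis by auto
qed

lemma cyl_Int:
  assumes "length v \<le> length u"
  shows "cyl l v \<inter> cyl l u = (if (\<forall>i<length v. v ! i = u ! i) then cyl l u else {})"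
  using assms by (auto simp: cyl_def)

lemma cyl_as_Inter: "cyl l w = seq_space l \<inter> (\<Inter>k<length w. shift_pre l k (cyl l [w ! k]))"
  by (auto simp: cyl_def shift_pre_def funpow_shift shift_space shift_space')




fun qp :: "(nat \<Rightarrow> nat \<Rightarrow> real) \<Rightarrow> nat list \<Rightarrow> real" where
  "qp Q (a # b # w) = Q a b * qp Q (b # w)"
| "qp Q _ = 1"

lemma prod_qp: "(\<Prod>i<length w - 1. Q (w!i) (w!Suc i)) = qp Q w"
proof (induction Q w rule: qp.induct)
  case (1 Q a b w)
  have "(\<Prod>i<length (a # b # w) - 1. Q ((a # b # w) ! i) ((a # b # w) ! Suc i))
       = (\<Prod>i<Suc (length (b # w) - 1). Q ((a # b # w) ! i) ((a # b # w) ! Suc i))" by simp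
  also have "\<dots> = Q a b * (\<Prod>i<length (b # w) - 1. Q ((b # w) ! i) ((b # w) ! Suc i))"
    by (subst prod.lessThan_Suc_shift) simp
  finally show ?case using 1 by simp
qed auto

lemma qp_append: "v \<noteq> [] \<Longrightarrow> qp Q (w @ v) = qp Q (w @ [hd v]) * qp Q v"
proof (induction w)
  case Nil
  then show ?case by simp
next
  case (Cons a w)
  show ?case
  proof (cases w)
    case Nil
    then show ?thesis using Cons.prems by (cases v) auto
  next
    case (Cons b w')
    then show ?thesis using Cons.IH[OF \<open>v \<noteq> []\<close>] by simp
  qed
qed

lemma qp_nonneg: "(\<forall>i\<le>l. \<forall>j\<le>l. 0 \<le> Q i j) \<Longrightarrow> set w \<subseteq> {..l} \<Longrightarrow> 0 \<le> qp Q w"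
  by (induction Q w rule: qp.induct) auto

definition mu :: "(nat \<Rightarrow> nat \<Rightarrow> real) \<Rightarrow> (nat \<Rightarrow> real) \<Rightarrow> nat list \<Rightarrow> real" where
  "mu Q p w = p (w ! 0) * qp Q w"

locale mshift =
  fixes l :: nat and Q :: "nat \<Rightarrow> nat \<Rightarrow> real" and p :: "nat \<Rightarrow> real"
    and m :: "(nat \<Rightarrow> nat) measure"
  assumes ms: "markov_shift l Q p m"
begin

lemma Qnn: "\<forall>i\<le>l. \<forall>j\<le>l. 0 \<le> Q i j" using ms by (simp add: markov_shift_def)
lemma Qsum: "i \<le> l \<Longrightarrow> (\<Sum>j\<le>l. Q i j) = 1" using ms by (simp add: markov_shift_def)
lemma ppos: "a \<le> l \<Longrightarrow> 0 < p a" using ms by (simp add: markov_shift_def)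
lemma psum: "(\<Sum>a\<le>l. p a) = 1" using ms by (simp add: markov_shift_def)
lemma pstat: "j \<le> l \<Longrightarrow> (\<Sum>i\<le>l. p i * Q i j) = p j" using ms by (simp add: markov_shift_def)
lemma space_m: "space m = seq_space l" using ms by (simp add: markov_shift_def)
lemma sets_m: "sets m = sigma_sets (seq_space l) (cylinders l)" using ms by (simp add: markov_shift_def)

lemma emeasure_cyl: "w \<noteq> [] \<Longrightarrow> set w \<subseteq> {..l} \<Longrightarrow> emeasure m (cyl l w) = ennreal (mu Q p w)"
  using ms by (simp add: markov_shift_def mu_def prod_qp[simplified])

lemma mu_nonneg: "w \<noteq> [] \<Longrightarrow> set w \<subseteq> {..l} \<Longrightarrow> 0 \<le> mu Q p w"
  unfolding mu_def using qp_nonneg[OF Qnn] ppos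
  by (metis hd_conv_nth hd_in_set atMost_iff in_mono less_imp_le mult_nonneg_nonneg)

lemma cyl_sets: "cyl l w \<in> sets m"
proof (cases "w = []")
  case True
  then show ?thesis using sets.top[of m] by (simp add: cyl_Nil space_m)
next
  case False
  show ?thesis
  proof (cases "set w \<subseteq> {..l}")
    case True
    then show ?thesis using False by (auto simp: sets_m cylinders_def)
  next
    case nv: False
    then obtain i where i: "i < length w" "w ! i > l"
      by (metis atMost_iff in_set_conv_nth not_le subsetI)
    have "cyl l w = {}" using i by (auto simp: cyl_def seq_space_def) (metis not_le)
    then show ?thesis by simp
  qed
qed

lemma space_cyl: "seq_space l = (\<Union>a\<le>l. cyl l [a])"
  by (auto simp: cyl_def seq_space_def)

lemma emeasure_space: "emeasure m (space m) = 1"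
proof -
  have d: "disjoint_family_on (\<lambda>a. cyl l [a]) {..l}"
    by (auto simp: disjoint_family_on_def cyl_def)
  have "emeasure m (space m) = emeasure m (\<Union>a\<le>l. cyl l [a])" using space_cyl space_m by simp
  also have "\<dots> = (\<Sum>a\<le>l. emeasure m (cyl l [a]))"
    using d by (subst sum_emeasure[symmetric]) (auto simp: cyl_sets)
  also have "\<dots> = (\<Sum>a\<le>l. ennreal (p a))"
    by (intro sum.cong refl) (simp add: emeasure_cyl mu_def)
  also have "\<dots> = ennreal (\<Sum>a\<le>l. p a)"
    using ppos by (subst sum_ennreal) (auto intro: less_imp_le)
  finally show ?thesis using psum by simp
qed

lemma prob: "prob_space m"
  using emeasure_space by (rule prob_spaceI)

lemma shift_vimage_cyl: "shift -` cyl l v \<inter> seq_space l = (\<Union>a\<le>l. cyl l (a # v))"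
proof (intro equalityI subsetI)
  fix x assume x: "x \<in> shift -` cyl l v \<inter> seq_space l"
  show "x \<in> (\<Union>a\<le>l. cyl l (a # v))"
  proof (rule UN_I[of "x 0"])
    show "x 0 \<in> {..l}" using x by (auto simp: seq_space_def)
    show "x \<in> cyl l (x 0 # v)" using x
      by (auto simp: cyl_def shift_def seq_space_def nth_Cons split: nat.split)
  qed
qed (auto simp: cyl_def seq_space_def shift_def)

lemma fm: "finite_measure m" using prob by (simp add: prob_space_def)

lemma shift_meas: "shift \<in> measurable m m"
proof (rule measurable_sigma_sets[OF sets_m])
  show "cylinders l \<subseteq> Pow (seq_space l)" by (auto simp: cylinders_def cyl_def)
  show "shift \<in> space m \<rightarrow> seq_space l" by (auto simp: space_m shift_def seq_space_def)
  fix y assume "y \<in> cylinders l"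
  then obtain v where v: "y = cyl l v" by (auto simp: cylinders_def)
  have "shift -` y \<inter> space m = (\<Union>a\<le>l. cyl l (a # v))"
    unfolding v space_m by (rule shift_vimage_cyl)
  also have "\<dots> \<in> sets m" by (intro sets.finite_UN) (auto simp: cyl_sets)
  finally show "shift -` y \<inter> space m \<in> sets m" .
qed

lemma funpow_meas: "(shift ^^ k) \<in> measurable m m"
  by (induction k) (auto simp: funpow_Suc_right intro: measurable_compose[OF _ shift_meas])

lemma shift_pre_sets: "B \<in> sets m \<Longrightarrow> shift_pre l k B \<in> sets m"
  unfolding shift_pre_def using measurable_sets[OF funpow_meas] space_m by metis

lemma Int_stable_E: "Int_stable (insert {} (cylinders l))"
  unfolding Int_stable_def
proof (intro ballI)
  fix X Y assume X: "X \<in> insert {} (cylinders l)" and Y: "Y \<in> insert {} (cylinders l)"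
  show "X \<inter> Y \<in> insert {} (cylinders l)"
  proof (cases "X = {} \<or> Y = {}")
    case True then show ?thesis by auto
  next
    case False
    then obtain v u where v: "X = cyl l v" "v \<noteq> []" "set v \<subseteq> {..l}"
      and u: "Y = cyl l u" "u \<noteq> []" "set u \<subseteq> {..l}"
      using X Y by (auto simp: cylinders_def)
    show ?thesis
    proof (cases "length v \<le> length u")
      case True then show ?thesis using v u cyl_Int[OF True, of l] by (auto simp: cylinders_def)
    next
      case False
      hence le: "length u \<le> length v" by simp
      then show ?thesis using v u cyl_Int[OF le, of l] by (auto simp: cylinders_def Int_commute)
    qed
  qed
qed

lemma sets_E: "sets m = sigma_sets (seq_space l) (insert {} (cylinders l))"
  unfolding sets_m by (rule sigma_sets_eqI) (auto intro: sigma_sets.Empty)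

lemma E_Pow: "insert {} (cylinders l) \<subseteq> Pow (seq_space l)"
  by (auto simp: cylinders_def cyl_def)

lemma cover: "range (\<lambda>i. cyl l [min i l]) \<subseteq> insert {} (cylinders l)"
  "(\<Union>i. cyl l [min i l]) = seq_space l"
   apply (auto simp: cylinders_def)
  apply (auto simp: cyl_def seq_space_def)
  by (metis min.absorb1)

lemma distr_shift: "distr m m shift = m"
proof (rule measure_eqI_generator_eq[OF Int_stable_E E_Pow _ sets_E _ cover, symmetric])
  show "sets (distr m m shift) = sigma_sets (seq_space l) (insert {} (cylinders l))"
    using sets_E by simp
  show "emeasure m (cyl l [min i l]) \<noteq> \<infinity>" for i
    using finite_measure.emeasure_finite[OF fm] by simp
  fix X assume "X \<in> insert {} (cylinders l)"
  then consider "X = {}" | v where "X = cyl l v" "v \<noteq> []" "set v \<subseteq> {..l}"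
    by (auto simp: cylinders_def)
  then show "emeasure m X = emeasure (distr m m shift) X"
  proof cases
    case 1 then show ?thesis by simp
  next
    case 2
    then obtain x v' where xv: "v = x # v'" by (cases v) auto
    have xl: "x \<le> l" using 2 xv by auto
    have d: "disjoint_family_on (\<lambda>a. cyl l (a # v)) {..l}"
      by (auto simp: disjoint_family_on_def cyl_def)
    have "emeasure (distr m m shift) X = emeasure m (shift -` X \<inter> space m)"
      using 2 by (simp add: emeasure_distr shift_meas cyl_sets)
    also have "shift -` X \<inter> space m = (\<Union>a\<le>l. cyl l (a # v))"
      unfolding 2 space_m by (rule shift_vimage_cyl)
    also have "emeasure m \<dots> = (\<Sum>a\<le>l. emeasure m (cyl l (a # v)))"
      using d by (subst sum_emeasure[symmetric]) (auto simp: cyl_sets)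
    also have "\<dots> = (\<Sum>a\<le>l. ennreal (p a * Q a x * qp Q v))"
      using 2 xv by (intro sum.cong refl) (simp add: emeasure_cyl mu_def mult.assoc)
    also have "\<dots> = ennreal (\<Sum>a\<le>l. p a * Q a x * qp Q v)"
      using ppos[THEN less_imp_le] Qnn qp_nonneg[OF Qnn 2(3)] xl
      by (subst sum_ennreal) (auto intro!: mult_nonneg_nonneg)
    also have "(\<Sum>a\<le>l. p a * Q a x * qp Q v) = (\<Sum>a\<le>l. p a * Q a x) * qp Q v"
      by (simp add: sum_distrib_right)
    also have "\<dots> = mu Q p v" using pstat[OF xl] xv by (simp add: mu_def)
    finally show ?thesis using 2 emeasure_cyl by simp
  qed
qed

lemma shift_inv1: "B \<in> sets m \<Longrightarrow> emeasure m (shift_pre l 1 B) = emeasure m B"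
proof -
  assume B: "B \<in> sets m"
  have "emeasure m (shift_pre l 1 B) = emeasure (distr m m shift) B"
    using B by (simp add: emeasure_distr shift_meas shift_pre_def space_m)
  then show ?thesis by (simp add: distr_shift)
qed

lemma shift_inv: "B \<in> sets m \<Longrightarrow> emeasure m (shift_pre l k B) = emeasure m B"
proof (induction k)
  case 0
  then show ?case using sets.sets_into_space[of B m] space_m by (simp add: shift_pre_0 Int_absorb2)
next
  case (Suc k)
  have "shift_pre l (Suc k) B = shift_pre l 1 (shift_pre l k B)" by (simp add: shift_pre_shift_pre)
  then show ?case using Suc shift_inv1 shift_pre_sets by simp
qed

end



context mshift begin

lemma mu_append:
  assumes "v \<noteq> []" "hd v = c" "c \<le> l"
  shows "mu Q p (w @ v) = mu Q p (w @ [c]) / p c * mu Q p v"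
proof -
  have pc: "p c \<noteq> 0" using ppos[OF assms(3)] by simp
  have h0: "(w @ v) ! 0 = (w @ [c]) ! 0" using assms by (cases w; cases v) auto
  have "qp Q (w @ v) = qp Q (w @ [c]) * qp Q v" using qp_append[OF assms(1)] assms(2) by simp
  moreover have "v ! 0 = c" using assms by (cases v) auto
  ultimately show ?thesis using pc h0 by (simp add: mu_def field_simps)
qed

lemma K:
  assumes w: "set w \<subseteq> {..l}" and c: "c \<le> l" and B: "B \<in> sets m"
  shows "emeasure m (cyl l (w @ [c]) \<inter> shift_pre l (length w) B)
         = ennreal (mu Q p (w @ [c]) / p c) * emeasure m (cyl l [c] \<inter> B)"
proof -
  define C where "C = cyl l (w @ [c])"
  define F where "F = shift ^^ length w"
  define \<alpha> where "\<alpha> = mu Q p (w @ [c]) / p c"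
  have wc: "set (w @ [c]) \<subseteq> {..l}" using w c by auto
  have \<alpha>nn: "0 \<le> \<alpha>" unfolding \<alpha>_def using mu_nonneg[OF _ wc] ppos[OF c] by simp
  define M1 where "M1 = distr (restrict_space m C) m F"
  define M2 where "M2 = density m (\<lambda>x. ennreal \<alpha> * indicator (cyl l [c]) x)"
  have Csets: "C \<in> sets m" unfolding C_def by (rule cyl_sets)
  have CS: "C \<subseteq> seq_space l" unfolding C_def by (rule cyl_subset)
  have Fm: "F \<in> measurable (restrict_space m C) m"
    unfolding F_def by (intro measurable_restrict_space1 funpow_meas)
  have e1: "emeasure M1 X = emeasure m (C \<inter> shift_pre l (length w) X)" if X: "X \<in> sets m" for X
  proof -
    have "emeasure M1 X = emeasure (restrict_space m C) (F -` X \<inter> space (restrict_space m C))"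
      unfolding M1_def using Fm X by (simp add: emeasure_distr)
    also have "\<dots> = emeasure m (F -` X \<inter> space (restrict_space m C))"
      using Csets CS space_m by (intro emeasure_restrict_space) (auto simp: space_restrict_space Int_absorb2)
    also have "F -` X \<inter> space (restrict_space m C) = C \<inter> shift_pre l (length w) X"
      using CS space_m by (auto simp: space_restrict_space shift_pre_def F_def)
    finally show ?thesis .
  qed
  have dm: "(\<lambda>x. ennreal \<alpha> * indicator (cyl l [c]) x) \<in> borel_measurable m"
    using cyl_sets[of "[c]"] by measurable
  have e2: "emeasure M2 X = ennreal \<alpha> * emeasure m (cyl l [c] \<inter> X)" if X: "X \<in> sets m" for X
  proof -
    have "emeasure M2 X = (\<integral>\<^sup>+ x. ennreal \<alpha> * indicator (cyl l [c]) x * indicator X x \<partial>m)"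
      unfolding M2_def using dm X by (rule emeasure_density)
    also have "\<dots> = (\<integral>\<^sup>+ x. ennreal \<alpha> * indicator (cyl l [c] \<inter> X) x \<partial>m)"
      by (simp add: indicator_inter_arith mult.assoc)
    also have "\<dots> = ennreal \<alpha> * emeasure m (cyl l [c] \<inter> X)"
      using X cyl_sets by (intro nn_integral_cmult_indicator) auto
    finally show ?thesis .
  qed
  have eq: "M2 = M1"
  proof (rule measure_eqI_generator_eq[OF Int_stable_E E_Pow _ _ _ cover])
    show "sets M2 = sigma_sets (seq_space l) (insert {} (cylinders l))"
      unfolding M2_def using sets_E by simp
    show "sets M1 = sigma_sets (seq_space l) (insert {} (cylinders l))"
      unfolding M1_def using sets_E by simp
    show "emeasure M2 (cyl l [min i l]) \<noteq> \<infinity>" for i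
      using e2[OF cyl_sets] finite_measure.emeasure_finite[OF fm]
      by (simp add: ennreal_mult_eq_top_iff)
    fix X assume "X \<in> insert {} (cylinders l)"
    then consider "X = {}" | v where "X = cyl l v" "v \<noteq> []" "set v \<subseteq> {..l}"
      by (auto simp: cylinders_def)
    then show "emeasure M2 X = emeasure M1 X"
    proof cases
      case 1 then show ?thesis by (simp add: e1 e2)
    next
      case 2
      have i1: "C \<inter> shift_pre l (length w) X = (if hd v = c then cyl l (w @ v) else {})"
        unfolding C_def 2 by (rule cyl_append_shift[OF 2(2)])
      have le: "length [c] \<le> length v" using 2 by (cases v) auto
      have i2: "cyl l [c] \<inter> X = (if hd v = c then cyl l v else {})"
        unfolding 2 using cyl_Int[OF le, of l] 2(2) by (cases v) auto
      show ?thesis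
      proof (cases "hd v = c")
        case True
        have "emeasure M1 X = ennreal (mu Q p (w @ v))"
          using e1[OF cyl_sets[of v]] i1 True 2 w by (simp add: emeasure_cyl)
        also have "mu Q p (w @ v) = \<alpha> * mu Q p v"
          unfolding \<alpha>_def using mu_append[OF 2(2) True c] .
        also have "ennreal (\<alpha> * mu Q p v) = ennreal \<alpha> * ennreal (mu Q p v)"
          using \<alpha>nn mu_nonneg[OF 2(2,3)] by (simp add: ennreal_mult)
        also have "\<dots> = emeasure M2 X"
          using e2[OF cyl_sets[of v]] i2 True 2 by (simp add: emeasure_cyl)
        finally show ?thesis ..
      next
        case False
        then show ?thesis using e1[OF cyl_sets[of v]] e2[OF cyl_sets[of v]] i1 i2 2 by simp
      qed
    qed
  qed
  show ?thesis using e1[OF B] e2[OF B] eq unfolding C_def \<alpha>_def by simp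
qed

end



locale mpart = mshift +
  fixes n :: nat and P :: "nat \<Rightarrow> (nat \<Rightarrow> nat) set"
  assumes part: "is_partition l m n P"
    and cond_i: "\<forall>i\<le>n. (\<exists>a\<le>l. P i \<subseteq> cyl l [a])
                   \<or> (shift_pre l 1 (P i) = P i \<and> measure m (P i) = 0)"
    and cond_ii: "\<forall>i\<le>n. \<forall>j\<le>n.
                   (\<exists>a\<le>l. P i \<inter> shift_pre l 1 (P j) = cyl l [a] \<inter> shift_pre l 1 (P j))
                   \<or> measure m (P i \<inter> shift_pre l 1 (P j)) = 0"
begin

lemma null_sub: "A \<in> sets m \<Longrightarrow> N \<in> null_sets m \<Longrightarrow> A \<subseteq> N \<Longrightarrow> A \<in> null_sets m"
  by (metis emeasure_mono le_zero_eq null_setsD1 null_setsD2 null_setsI)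

lemma P_sets: "i \<le> n \<Longrightarrow> P i \<in> sets m" using part by (simp add: is_partition_def)
lemma P_cover: "(\<Union>i\<le>n. P i) = seq_space l" using part by (simp add: is_partition_def)

lemma measure_shift: "B \<in> sets m \<Longrightarrow> measure m (shift_pre l k B) = measure m B"
  by (simp add: measure_def shift_inv)

lemma measure0_null: "B \<in> sets m \<Longrightarrow> measure m B = 0 \<Longrightarrow> B \<in> null_sets m"
  using finite_measure.emeasure_eq_measure[OF fm] by (intro null_setsI) auto

definition GS where "GS = sigma_sets (seq_space l) {shift_pre l k (P i) | k i. i \<le> n}"

lemma GS_gen_Pow: "{shift_pre l k (P i) | k i. i \<le> n} \<subseteq> Pow (seq_space l)"
  by (auto simp: shift_pre_def)

lemma GS_sa: "sigma_algebra (seq_space l) GS"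
  unfolding GS_def using GS_gen_Pow by (rule sigma_algebra_sigma_sets)

lemma GS_sets: "GS \<subseteq> sets m"
proof -
  have "{shift_pre l k (P i) | k i. i \<le> n} \<subseteq> sets m" using P_sets shift_pre_sets by auto
  then show ?thesis unfolding GS_def using sets.sigma_sets_subset[of _ m] space_m by auto
qed

lemma GS_space: "A \<in> GS \<Longrightarrow> A \<subseteq> seq_space l"
  unfolding GS_def using GS_gen_Pow by (rule sigma_sets_into_sp)

definition U where "U a = (\<Union>i\<in>{i. i \<le> n \<and> P i \<subseteq> cyl l [a]}. P i)"
definition Nul where "Nul = (\<Union>i\<in>{i. i \<le> n \<and> measure m (P i) = 0}. P i)"

lemma Nul_null: "Nul \<in> null_sets m"
  unfolding Nul_def using P_sets measure0_null by (intro null_sets_UN') auto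

lemma U_GS: "shift_pre l k (U a) \<in> GS"
proof -
  interpret sigma_algebra "seq_space l" GS by (rule GS_sa)
  have "shift_pre l k (U a) = (\<Union>i\<in>{i. i \<le> n \<and> P i \<subseteq> cyl l [a]}. shift_pre l k (P i))"
    unfolding U_def by (rule shift_pre_UN)
  also have "\<dots> \<in> GS" by (intro finite_UN) (auto simp: GS_def)
  finally show ?thesis .
qed

lemma U_eq: "x \<in> seq_space l \<Longrightarrow> x \<notin> Nul \<Longrightarrow> (x \<in> cyl l [a] \<longleftrightarrow> x \<in> U a)"
proof
  assume x: "x \<in> seq_space l" "x \<notin> Nul" "x \<in> cyl l [a]"
  then obtain i where i: "i \<le> n" "x \<in> P i" using P_cover by auto
  show "x \<in> U a"
  proof (cases "measure m (P i) = 0")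
    case True then show ?thesis using i x by (auto simp: Nul_def)
  next
    case False
    then obtain b where b: "b \<le> l" "P i \<subseteq> cyl l [b]" using cond_i i by auto
    then have "b = a" using i x by (auto simp: cyl_def)
    then show ?thesis using b i by (auto simp: U_def)
  qed
qed (auto simp: U_def)

lemma basic_approx:
  assumes "w \<noteq> []"
  shows "\<exists>A'\<in>GS. (A' - cyl l w) \<union> (cyl l w - A') \<in> null_sets m"
proof -
  interpret G: sigma_algebra "seq_space l" GS by (rule GS_sa)
  define A' where "A' = (\<Inter>k<length w. shift_pre l k (U (w ! k)))"
  have A'GS: "A' \<in> GS" unfolding A'_def using assms U_GS by (intro G.finite_INT) auto
  define NN where "NN = (\<Union>k<length w. shift_pre l k Nul)"
  have NN: "NN \<in> null_sets m" unfolding NN_def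
  proof (intro null_sets_UN')
    fix k show "shift_pre l k Nul \<in> null_sets m"
      using Nul_null by (metis null_setsD1 null_setsD2 null_setsI shift_inv shift_pre_sets)
  qed auto
  have A'S: "A' \<subseteq> seq_space l" using A'GS GS_space by auto
  have sub: "(A' - cyl l w) \<union> (cyl l w - A') \<subseteq> NN"
  proof
    fix s assume s: "s \<in> (A' - cyl l w) \<union> (cyl l w - A')"
    then have sS: "s \<in> seq_space l" using A'S cyl_subset by blast
    show "s \<in> NN"
    proof (rule ccontr)
      assume "s \<notin> NN"
      then have "\<forall>k<length w. (shift ^^ k) s \<notin> Nul" using sS by (auto simp: NN_def shift_pre_def)
      then have "\<forall>k<length w. (s \<in> shift_pre l k (cyl l [w ! k]) \<longleftrightarrow> s \<in> shift_pre l k (U (w ! k)))"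
        using U_eq shift_space[OF sS] sS by (auto simp: shift_pre_def)
      then have "s \<in> cyl l w \<longleftrightarrow> s \<in> A'"
        unfolding A'_def using cyl_as_Inter[of l w] sS assms by auto
      then show False using s by auto
    qed
  qed
  have "(A' - cyl l w) \<union> (cyl l w - A') \<in> sets m"
    using A'GS GS_sets cyl_sets by auto
  then show ?thesis using null_sub[OF _ NN sub] A'GS by blast
qed

lemma approx: "B \<in> sigma_sets (seq_space l) (cylinders l) \<Longrightarrow>
  \<exists>A'\<in>GS. (A' - B) \<union> (B - A') \<in> null_sets m"
proof (induction rule: sigma_sets.induct)
  case (Basic a)
  then show ?case using basic_approx by (auto simp: cylinders_def)
next
  case Empty
  then show ?case by (intro bexI[of _ "{}"]) (auto simp: GS_def intro: sigma_sets.Empty)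
next
  case (Compl a)
  then obtain A where A: "A \<in> GS" "(A - a) \<union> (a - A) \<in> null_sets m" by blast
  have "seq_space l - A \<in> GS" using A(1) unfolding GS_def by (rule sigma_sets.Compl)
  moreover have "((seq_space l - A) - (seq_space l - a)) \<union> ((seq_space l - a) - (seq_space l - A))
     = (A - a) \<union> (a - A)" using GS_space[OF A(1)] Compl.hyps sigma_sets_into_sp[of "cylinders l" "seq_space l" a]
    by (auto simp: cylinders_def cyl_def)
  ultimately show ?case using A(2) by metis
next
  case (Union a)
  then have "\<forall>i. \<exists>A\<in>GS. (A - a i) \<union> (a i - A) \<in> null_sets m" by blast
  then obtain f where f: "\<And>i. f i \<in> GS" "\<And>i. (f i - a i) \<union> (a i - f i) \<in> null_sets m"
    by metis
  have fU: "(\<Union>i. f i) \<in> GS" using f(1) unfolding GS_def by (intro sigma_sets.Union) auto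
  have aU: "(\<Union>i. a i) \<in> sets m" using Union.hyps sets_m by (metis sigma_sets.Union)
  have "(\<Union>i. (f i - a i) \<union> (a i - f i)) \<in> null_sets m" using f(2) by auto
  moreover have "((\<Union>i. f i) - (\<Union>i. a i)) \<union> ((\<Union>i. a i) - (\<Union>i. f i)) \<subseteq> (\<Union>i. (f i - a i) \<union> (a i - f i))"
    by blast
  moreover have "((\<Union>i. f i) - (\<Union>i. a i)) \<union> ((\<Union>i. a i) - (\<Union>i. f i)) \<in> sets m"
    using fU GS_sets aU by auto
  ultimately show ?case using fU null_sub by blast
qed

lemma generating: "generating l m n P"
  unfolding generating_def
proof
  fix B assume "B \<in> sets m"
  then obtain A' where A': "A' \<in> GS" "(A' - B) \<union> (B - A') \<in> null_sets m" using approx sets_m by auto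
  have "emeasure m ((A' - B) \<union> (B - A')) = 0" using A'(2) by (rule null_setsD1)
  then show "\<exists>A'\<in>sigma_sets (seq_space l) {shift_pre l k (P i) |k i. i \<le> n}.
            measure m (A' - B \<union> (B - A')) = 0"
    using A'(1) unfolding GS_def by (intro bexI[of _ A']) (auto simp: measure_def)
qed

end



context mpart begin

lemma Kr:
  assumes w: "set w \<subseteq> {..l}" and c: "c \<le> l" and B: "B \<in> sets m"
  shows "measure m (cyl l (w @ [c]) \<inter> shift_pre l (length w) B)
         = mu Q p (w @ [c]) / p c * measure m (cyl l [c] \<inter> B)"
proof -
  have wc: "set (w @ [c]) \<subseteq> {..l}" using w c by auto
  have nn: "0 \<le> mu Q p (w @ [c]) / p c" using mu_nonneg[OF _ wc] ppos[OF c] by simp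
  show ?thesis unfolding measure_def K[OF w c B] using nn by (simp add: enn2real_mult)
qed

lemma mmono: "A \<subseteq> B \<Longrightarrow> B \<in> sets m \<Longrightarrow> measure m A \<le> measure m B"
  by (rule finite_measure.finite_measure_mono[OF fm])

lemma markov: "markov_property l m n P"
  unfolding markov_property_def
proof (intro allI impI)
  fix N :: nat and idx :: "nat \<Rightarrow> nat"
  assume N1: "1 \<le> N" and bd: "\<forall>k\<le>N. idx k \<le> n"
    and pos0: "0 < measure m (\<Inter>k<N. shift_pre l k (P (idx k)))"
  define Y where "Y k = P (idx k)" for k
  define Z where "Z k = Y k \<inter> shift_pre l 1 (Y (Suc k))" for k
  define D where "D j = (\<Inter>k<j. shift_pre l k (Y k))" for j
  have pos: "0 < measure m (D N)" using pos0 by (simp add: D_def Y_def)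
  have Ysets: "k \<le> N \<Longrightarrow> Y k \<in> sets m" for k using bd P_sets by (simp add: Y_def)
  have Zsets: "k < N \<Longrightarrow> Z k \<in> sets m" for k
    unfolding Z_def using Ysets shift_pre_sets by auto
  have shZ: "shift_pre l k (Z k) = shift_pre l k (Y k) \<inter> shift_pre l (Suc k) (Y (Suc k))" for k
    by (simp add: Z_def shift_pre_Int shift_pre_shift_pre)
  have DSuc: "D (Suc j) = D j \<inter> shift_pre l j (Y j)" for j
    by (auto simp: D_def lessThan_Suc)
  have good: "0 < measure m (Z k)" if k: "Suc k < N" for k
  proof (rule ccontr)
    assume "\<not> 0 < measure m (Z k)"
    then have z: "measure m (Z k) = 0" using measure_nonneg[of m "Z k"] by linarith
    have "D N \<subseteq> shift_pre l k (Z k)" unfolding shZ D_def using k by auto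
    then have "measure m (D N) \<le> measure m (shift_pre l k (Z k))"
      using shift_pre_sets Zsets k by (intro mmono) auto
    also have "\<dots> = 0" using measure_shift Zsets k z by simp
    finally show False using pos by simp
  qed
  have "\<forall>k. \<exists>a. (0 < measure m (Z k) \<and> Suc k \<le> N) \<longrightarrow>
          a \<le> l \<and> Z k = cyl l [a] \<inter> shift_pre l 1 (Y (Suc k))"
  proof
    fix k
    show "\<exists>a. (0 < measure m (Z k) \<and> Suc k \<le> N) \<longrightarrow>
          a \<le> l \<and> Z k = cyl l [a] \<inter> shift_pre l 1 (Y (Suc k))"
    proof (cases "0 < measure m (Z k) \<and> Suc k \<le> N")
      case True
      then have "idx k \<le> n" "idx (Suc k) \<le> n" using bd by auto
      then show ?thesis using cond_ii True unfolding Z_def Y_def by force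
    qed auto
  qed
  then obtain a where a: "\<And>k. 0 < measure m (Z k) \<Longrightarrow> Suc k \<le> N \<Longrightarrow>
          a k \<le> l \<and> Z k = cyl l [a k] \<inter> shift_pre l 1 (Y (Suc k))"
    by metis
  have ind: "j < N \<Longrightarrow> D (Suc j) = cyl l (map a [0..<j]) \<inter> shift_pre l j (Y j)" for j
  proof (induction j)
    case 0
    then show ?case by (auto simp: D_def cyl_Nil shift_pre_0)
  next
    case (Suc j)
    have aj: "a j \<le> l \<and> Z j = cyl l [a j] \<inter> shift_pre l 1 (Y (Suc j))"
      using a[OF good] Suc.prems by auto
    have "D (Suc (Suc j)) = cyl l (map a [0..<j]) \<inter> shift_pre l j (Z j)"
      using Suc by (simp add: DSuc[of "Suc j"] shZ Int_assoc)
    also have "\<dots> = cyl l (map a [0..<j]) \<inter> shift_pre l j (cyl l [a j]) \<inter> shift_pre l (Suc j) (Y (Suc j))"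
      using aj by (simp add: shift_pre_Int shift_pre_shift_pre Int_assoc)
    also have "\<dots> = cyl l (map a [0..<Suc j]) \<inter> shift_pre l (Suc j) (Y (Suc j))"
      using cyl_snoc[of l "map a [0..<j]" "a j"] by simp
    finally show ?case .
  qed
  define w where "w = map a [0..<N - 1]"
  have lw: "length w = N - 1" by (simp add: w_def)
  have wv: "set w \<subseteq> {..l}" unfolding w_def using a[OF good] by auto
  have DN: "D N = cyl l w \<inter> shift_pre l (N - 1) (Y (N - 1))"
    using ind[of "N - 1"] N1 by (simp add: w_def)
  have NN: "Suc (N - 1) = N" using N1 by simp
  have DSN: "D (Suc N) = cyl l w \<inter> shift_pre l (N - 1) (Z (N - 1))"
    using DN shZ[of "N - 1"] NN by (simp add: DSuc Int_assoc)
  have goalL: "(\<Inter>k\<le>N. shift_pre l k (P (idx k))) = D (Suc N)"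
    by (simp add: D_def Y_def lessThan_Suc_atMost)
  have goalL2: "(\<Inter>k<N. shift_pre l k (P (idx k))) = D N" by (simp add: D_def Y_def)
  have goalR: "P (idx (N - 1)) \<inter> shift_pre l 1 (P (idx N)) = Z (N - 1)"
    using NN by (simp add: Z_def Y_def)
  have ZN: "Z (N - 1) \<in> sets m" using Zsets N1 by simp
  show "measure m (\<Inter>k\<le>N. shift_pre l k (P (idx k))) / measure m (\<Inter>k<N. shift_pre l k (P (idx k)))
        = measure m (P (idx (N - 1)) \<inter> shift_pre l 1 (P (idx N))) / measure m (P (idx (N - 1)))"
  proof (cases "0 < measure m (Z (N - 1))")
    case False
    then have z: "measure m (Z (N - 1)) = 0" using measure_nonneg[of m "Z (N - 1)"] by linarith
    have "measure m (D (Suc N)) \<le> measure m (shift_pre l (N - 1) (Z (N - 1)))"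
      unfolding DSN using shift_pre_sets ZN by (intro mmono) auto
    also have "\<dots> = 0" using measure_shift ZN z by simp
    finally have "measure m (D (Suc N)) = 0" using measure_nonneg[of m "D (Suc N)"] by linarith
    then show ?thesis unfolding goalL goalL2 goalR using z by simp
  next
    case True
    define c where "c = a (N - 1)"
    have c: "c \<le> l" "Z (N - 1) = cyl l [c] \<inter> shift_pre l 1 (Y N)"
      using a[OF True] NN unfolding c_def by auto
    have YN1: "Y (N - 1) \<in> sets m" using Ysets by simp
    have YNs: "Y N \<in> sets m" using Ysets by simp
    have ZY: "Z (N - 1) \<subseteq> Y (N - 1)" by (simp add: Z_def)
    have Ysub: "Y (N - 1) \<subseteq> cyl l [c]"
    proof -
      have iN: "idx (N - 1) \<le> n" using bd by simp
      show ?thesis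
      proof (cases "measure m (Y (N - 1)) = 0")
        case True
        have "measure m (Z (N - 1)) \<le> measure m (Y (N - 1))" using ZY YN1 by (rule mmono)
        then show ?thesis using True \<open>0 < measure m (Z (N - 1))\<close> by simp
      next
        case False
        then obtain b where b: "Y (N - 1) \<subseteq> cyl l [b]" using cond_i iN unfolding Y_def by blast
        have "Z (N - 1) \<noteq> {}" using True by auto
        then obtain s where s: "s \<in> Z (N - 1)" by blast
        then have "s \<in> cyl l [c]" "s \<in> cyl l [b]" using c(2) ZY b by auto
        then have "b = c" by (auto simp: cyl_def)
        then show ?thesis using b by simp
      qed
    qed
    define \<alpha> where "\<alpha> = mu Q p (w @ [c]) / p c"
    have DN': "D N = cyl l (w @ [c]) \<inter> shift_pre l (length w) (Y (N - 1))"
    proof -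
      have "Y (N - 1) = cyl l [c] \<inter> Y (N - 1)" using Ysub by blast
      then have "D N = cyl l w \<inter> shift_pre l (N - 1) (cyl l [c]) \<inter> shift_pre l (N - 1) (Y (N - 1))"
        using DN by (metis Int_assoc shift_pre_Int)
      then show ?thesis using cyl_snoc[of l w c] lw by simp
    qed
    have DSN': "D (Suc N) = cyl l (w @ [c]) \<inter> shift_pre l (length w) (shift_pre l 1 (Y N))"
    proof -
      have "D (Suc N) = cyl l w \<inter> shift_pre l (N - 1) (cyl l [c]) \<inter> shift_pre l (N - 1) (shift_pre l 1 (Y N))"
        using DSN c(2) by (simp add: shift_pre_Int Int_assoc)
      then show ?thesis using cyl_snoc[of l w c] lw by simp
    qed
    have mDN: "measure m (D N) = \<alpha> * measure m (Y (N - 1))"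
      unfolding DN' \<alpha>_def Kr[OF wv c(1) YN1] using Ysub by (simp add: Int_absorb1)
    have mDSN: "measure m (D (Suc N)) = \<alpha> * measure m (Z (N - 1))"
      unfolding DSN' \<alpha>_def Kr[OF wv c(1) shift_pre_sets[OF YNs]] c(2) ..
    have "\<alpha> \<noteq> 0" "measure m (Y (N - 1)) \<noteq> 0" using pos mDN by auto
    then show ?thesis unfolding goalL goalL2 goalR mDN mDSN by (simp add: Y_def)
  qed
qed

end

theorem lemma4:
  fixes l n :: nat and Q :: "nat \<Rightarrow> nat \<Rightarrow> real" and p :: "nat \<Rightarrow> real"
    and m :: "(nat \<Rightarrow> nat) measure" and P :: "nat \<Rightarrow> (nat \<Rightarrow> nat) set"
  assumes ms: "markov_shift l Q p m"
    and part: "is_partition l m n P"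
    and cond_i: "\<forall>i\<le>n. (\<exists>a\<le>l. P i \<subseteq> cyl l [a])
                   \<or> (shift_pre l 1 (P i) = P i \<and> measure m (P i) = 0)"
    and cond_ii: "\<forall>i\<le>n. \<forall>j\<le>n.
                   (\<exists>a\<le>l. P i \<inter> shift_pre l 1 (P j) = cyl l [a] \<inter> shift_pre l 1 (P j))
                   \<or> measure m (P i \<inter> shift_pre l 1 (P j)) = 0"
  shows "generating l m n P \<and> markov_property l m n P"
  proof -
  interpret mpart l Q p m n P
    using ms part cond_i cond_ii by (unfold_locales) auto
  show ?thesis using generating markov by simp
qed

end
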